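(* Let $p$ be a prime with $p\equiv3\pmod 4$. Let $E$ be the group of translations of $\mathbb F_p^2$, let $Q\le{\rm SL}(2,p)$ be a subgroup isomorphic to the quaternion group $Q_8$, and let $g\in Q$ have order $4$. Then $E\rtimes Q$ and $E\rtimes\langle g\rangle$, acting on $\mathbb F_p^2$, are nonisomorphic primitive groups of degree $p^2$ with the same spectrum.
   Context: The spectrum of a permutation group is the set of cycle types of its elements. *)

theory Defs
  imports "HOL-Algebra.Algebra" "HOL-Library.Multiset"
begin

text \<open>F_p is modelled by residues {0..<p}; F_p^2 by pairs of residues.
  A 2x2 matrix ((a,b),(c,d)) is the tuple (a,b,c,d).\<close>

type_synonym mat2 = "nat \<times> nat \<times> nat \<times> nat"

definition Fp2 :: "nat \<Rightarrow> (nat \<times> nat) set" where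
  "Fp2 p = {0..<p} \<times> {0..<p}"

definition mmul :: "nat \<Rightarrow> mat2 \<Rightarrow> mat2 \<Rightarrow> mat2" where
  "mmul p M N = (case M of (a,b,c,d) \<Rightarrow> case N of (e,f,g,h) \<Rightarrow>
     ((a*e+b*g) mod p, (a*f+b*h) mod p, (c*e+d*g) mod p, (c*f+d*h) mod p))"

definition SL2 :: "nat \<Rightarrow> mat2 set" where
  "SL2 p = {(m1,m2,m3,m4). m1 < p \<and> m2 < p \<and> m3 < p \<and> m4 < p \<and> (m1*m4) mod p = (m2*m3 + 1) mod p}"

definition SL2_group :: "nat \<Rightarrow> mat2 monoid" where
  "SL2_group p = \<lparr>carrier = SL2 p, monoid.mult = mmul p, one = (1,0,0,1)\<rparr>"

definition affine :: "nat \<Rightarrow> mat2 \<Rightarrow> nat \<times> nat \<Rightarrow> (nat \<times> nat \<Rightarrow> nat \<times> nat)" where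
  "affine p M v = (\<lambda>x\<in>Fp2 p. case M of (a,b,c,d) \<Rightarrow> case x of (x1,x2) \<Rightarrow> case v of (v1,v2) \<Rightarrow>
      ((a*x1 + b*x2 + v1) mod p, (c*x1 + d*x2 + v2) mod p))"

text \<open>E \<rtimes> H, acting on F_p^2: all maps x \<mapsto> M x + v with M \<in> H, v a translation.\<close>
definition affine_group :: "nat \<Rightarrow> mat2 set \<Rightarrow> (nat \<times> nat \<Rightarrow> nat \<times> nat) set" where
  "affine_group p H = {affine p M v | M v. M \<in> H \<and> v \<in> Fp2 p}"

definition perm_group :: "'a set \<Rightarrow> ('a \<Rightarrow> 'a) set \<Rightarrow> ('a \<Rightarrow> 'a) monoid" where
  "perm_group V G = (BijGroup V)\<lparr>carrier := G\<rparr>"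

text \<open>Elements (s, u): s = True means a minus sign, u \<in> {0,1,2,3} stands for 1,i,j,k.\<close>
definition qtab :: "(bool \<times> nat) list list" where
  "qtab = [[(False,0),(False,1),(False,2),(False,3)],
           [(False,1),(True,0),(False,3),(True,2)],
           [(False,2),(True,3),(True,0),(False,1)],
           [(False,3),(False,2),(True,1),(True,0)]]"

definition q8mult :: "bool \<times> nat \<Rightarrow> bool \<times> nat \<Rightarrow> bool \<times> nat" where
  "q8mult x y = (case x of (s,a) \<Rightarrow> case y of (t,b) \<Rightarrow>
     (case qtab ! a ! b of (u,c) \<Rightarrow> ((s \<noteq> t) \<noteq> u, c)))"

definition Q8 :: "(bool \<times> nat) monoid" where
  "Q8 = \<lparr>carrier = UNIV \<times> {0..<4}, monoid.mult = q8mult, one = (False,0)\<rparr>"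

definition transitive_on :: "'a set \<Rightarrow> ('a \<Rightarrow> 'a) set \<Rightarrow> bool" where
  "transitive_on V G \<longleftrightarrow> (\<forall>x\<in>V. \<forall>y\<in>V. \<exists>g\<in>G. g x = y)"

definition is_block :: "'a set \<Rightarrow> ('a \<Rightarrow> 'a) set \<Rightarrow> 'a set \<Rightarrow> bool" where
  "is_block V G B \<longleftrightarrow> B \<subseteq> V \<and> B \<noteq> {} \<and> (\<forall>g\<in>G. g ` B = B \<or> g ` B \<inter> B = {})"

definition primitive :: "'a set \<Rightarrow> ('a \<Rightarrow> 'a) set \<Rightarrow> bool" where
  "primitive V G \<longleftrightarrow> transitive_on V G \<and>
     (\<forall>B. is_block V G B \<longrightarrow> card B = 1 \<or> B = V)"

definition cycle_of :: "('a \<Rightarrow> 'a) \<Rightarrow> 'a \<Rightarrow> 'a set" where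
  "cycle_of f x = {(f ^^ n) x | n. True}"

definition cycle_type :: "'a set \<Rightarrow> ('a \<Rightarrow> 'a) \<Rightarrow> nat multiset" where
  "cycle_type V f = image_mset card (mset_set {cycle_of f x | x. x \<in> V})"

definition spectrum_perm :: "'a set \<Rightarrow> ('a \<Rightarrow> 'a) set \<Rightarrow> nat multiset set" where
  "spectrum_perm V G = cycle_type V ` G"

end

theory Submission
  imports Defs "HOL-Number_Theory.Number_Theory"
begin


lemma int_mod_rep: "int (x mod p) = int x - int p * int (x div p)"
  by (metis add_diff_cancel_left' div_mult_mod_eq mult.commute of_nat_add of_nat_mult)

lemma resid_eq_iff:
  assumes "x < p" "y < p" shows "x = y \<longleftrightarrow> int p dvd (int x - int y)"
proof -
  have "x = y \<longleftrightarrow> int x mod int p = int y mod int p" using assms by simp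
  also have "\<dots> \<longleftrightarrow> int p dvd (int x - int y)" by (rule mod_eq_dvd_iff)
  finally show ?thesis .
qed

lemma resid_eqI:
  assumes "x < p" "y < p" "int p dvd (int x - int y)" shows "x = y"
  using resid_eq_iff assms by blast

lemma mod_eqI_nat:
  assumes "int p dvd (int x - int y)" shows "x mod p = y mod p"
  using assms by (metis mod_eq_dvd_iff of_nat_eq_iff zmod_int)

lemma mod_eqD_nat:
  assumes "x mod p = y mod p" shows "int p dvd (int x - int y)"
  using assms by (metis mod_eq_dvd_iff of_nat_eq_iff zmod_int)

lemma minus_one_nonQR:
  fixes t :: int
  assumes p: "Factorial_Ring.prime p" "p mod 4 = 3" and d: "int p dvd t^2 + 1"
  shows False
proof -
  define P where "P = int p"
  have p2: "p > 2" using p prime_gt_1_nat by (cases "p = 2") auto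
  define t' where "t' = nat (t mod P)"
  have P0: "P > 0" using p2 P_def by simp
  have tt: "int t' = t mod P" using P0 t'_def by simp
  have c1: "[int t' = t] (mod P)" using tt by (simp add: cong_def)
  have c2: "[int t' ^ 2 = -1] (mod P)"
  proof -
    have "[int t' ^ 2 = t^2] (mod P)" using c1 by (rule cong_pow)
    moreover have "[t^2 = -1] (mod P)" using d P_def
      by (simp add: cong_iff_dvd_diff)
    ultimately show ?thesis by (rule cong_trans)
  qed
  have nd: "\<not> p dvd t'"
  proof
    assume "p dvd t'"
    then have "P dvd int t'" using P_def by simp
    then have "P dvd int t' ^ 2" by (simp add: power2_eq_square)
    moreover have "P dvd int t' ^ 2 + 1" using c2 by (simp add: cong_iff_dvd_diff)
    ultimately have "P dvd 1" by (metis add_diff_cancel_left' dvd_diff)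
    then show False using P_def p2 by simp
  qed
  have "[t' ^ (p - 1) = 1] (mod p)" using fermat_theorem[OF p(1) nd] .
  then have f: "[int t' ^ (p - 1) = 1] (mod P)" using P_def
    by (metis cong_int_iff of_nat_1 of_nat_power)
  define k where "k = p div 4"
  have k: "p - 1 = 2 * (2*k+1)" using p(2) unfolding k_def by presburger
  have "[int t' ^ (p - 1) = (int t'^2)^(2*k+1)] (mod P)" unfolding k by (simp only: power_mult cong_refl)
  moreover have "[(int t'^2)^(2*k+1) = (-1)^(2*k+1)] (mod P)" using c2 by (rule cong_pow)
  ultimately have "[1 = (-1::int)^(2*k+1)] (mod P)" using f by (meson cong_sym cong_trans)
  then have "P dvd 2" by (simp add: cong_iff_dvd_diff)
  then have "P \<le> 2" by (rule zdvd_imp_le) simp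
  then show False using P_def p2 by simp
qed


lemma int_prime: "Factorial_Ring.prime p \<Longrightarrow> Factorial_Ring.prime (int p)" by simp

lemma sumsq_zero:
  fixes x y :: int
  assumes p: "Factorial_Ring.prime p" "p mod 4 = 3" and d: "int p dvd x^2 + y^2"
  shows "int p dvd x \<and> int p dvd y"
proof -
  define P where "P = int p"
  have pr: "Factorial_Ring.prime P" using p P_def by simp
  have y: "P dvd y"
  proof (rule ccontr)
    assume "\<not> P dvd y"
    then have "coprime P y" using pr by (simp add: prime_imp_coprime)
    then have "coprime y P" by (simp add: coprime_commute)
    then obtain z where "[y * z = 1] (mod P)" using cong_solve_coprime_int by blast
    then have z: "P dvd y*z - 1" by (simp add: cong_iff_dvd_diff)
    have "P dvd (x*z)^2 + 1" using z d unfolding P_def by Groebner_Basis.algebra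
    then show False using minus_one_nonQR[OF p] P_def by blast
  qed
  then have "P dvd x^2" using d P_def by (metis dvd_add_left_iff dvd_mult2 power2_eq_square)
  then have "P dvd x" using pr by (simp add: power2_eq_square prime_dvd_mult_iff)
  then show ?thesis using y P_def by simp
qed


lemma mm2: "((a::nat)*(x mod p) + b*(y mod p)) mod p = (a*x+b*y) mod p"
  by (metis mod_add_eq mod_mult_right_eq)
lemma mm2': "((x mod p)*(a::nat) + (y mod p)*b) mod p = (x*a+y*b) mod p"
  by (metis mod_add_eq mod_mult_left_eq)

lemma mmul_assoc: "mmul p (mmul p A B) C = mmul p A (mmul p B C)"
  apply (cases A; cases B; cases C)
  apply (simp only: mmul_def prod.case mm2 mm2')
  apply (simp add: algebra_simps)
  done

lemma SL2_iff: "(m1,m2,m3,m4) \<in> SL2 p \<longleftrightarrow> m1<p \<and> m2<p \<and> m3<p \<and> m4<p \<and> int p dvd (int m1 * int m4 - int m2 * int m3 - 1)"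
proof -
  have "((m1*m4) mod p = (m2*m3 + 1) mod p) \<longleftrightarrow> int p dvd (int (m1*m4) - int (m2*m3 + 1))"
    using mod_eqI_nat mod_eqD_nat by blast
  then show ?thesis unfolding SL2_def by (simp add: algebra_simps)
qed

lemmas zsimps = of_nat_add of_nat_mult int_mod_rep

lemma mmul_closed:
  assumes p: "p > 0" and M: "(a,b,c,d) \<in> SL2 p" and N: "(e,f,g,h) \<in> SL2 p"
  shows "mmul p (a,b,c,d) (e,f,g,h) \<in> SL2 p"
proof -
  have d1: "int p dvd (int a * int d - int b * int c - 1)" and d2: "int p dvd (int e * int h - int f * int g - 1)"
    using M N by (auto simp: SL2_iff)
  show ?thesis unfolding mmul_def prod.case SL2_iff using p
    apply (simp only: zsimps mod_less_divisor simp_thms)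
    using d1 d2 by Groebner_Basis.algebra
qed

definition madj :: "nat \<Rightarrow> mat2 \<Rightarrow> mat2" where
  "madj p M = (case M of (a,b,c,d) \<Rightarrow> (d, (p-b) mod p, (p-c) mod p, a))"

lemma madj_SL2:
  assumes p1: "p > 1" and M: "(a,b,c,d) \<in> SL2 p"
  shows "madj p (a,b,c,d) \<in> SL2 p" "mmul p (madj p (a,b,c,d)) (a,b,c,d) = (1,0,0,1)"
proof -
  have p: "p > 0" using p1 by simp
  have d1: "int p dvd (int a * int d - int b * int c - 1)" and lt: "a<p" "b<p" "c<p" "d<p"
    using M by (auto simp: SL2_iff)
  have e: "x mod p = y" if "y < p" "int p dvd int x - int y" for x y
    using mod_eqI_nat[OF that(2)] that(1) by simp
  show "madj p (a,b,c,d) \<in> SL2 p" unfolding madj_def prod.case SL2_iff 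
    apply (simp only: zsimps mod_less_divisor[OF p] lt simp_thms of_nat_diff[OF less_imp_le[OF lt(2)]] of_nat_diff[OF less_imp_le[OF lt(3)]])
    using d1 by Groebner_Basis.algebra
  show "mmul p (madj p (a,b,c,d)) (a,b,c,d) = (1,0,0,1)"
    unfolding madj_def mmul_def prod.case prod.inject
    apply (intro conjI e)
    apply (simp_all only: p p1 zsimps of_nat_diff[OF less_imp_le[OF lt(2)]] of_nat_diff[OF less_imp_le[OF lt(3)]] of_nat_0 of_nat_1 diff_zero)
    subgoal using d1 by Groebner_Basis.algebra
    subgoal by Groebner_Basis.algebra
    subgoal by Groebner_Basis.algebra
    subgoal using d1 by Groebner_Basis.algebra
    done
qed


lemma SL2_one: "p > 1 \<Longrightarrow> (1,0,0,1) \<in> SL2 p"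
  unfolding SL2_def by simp

lemma SL2_group: assumes "p > 1" shows "group (SL2_group p)"
proof (rule groupI)
  have p: "p > 0" using assms by simp
  show "x \<otimes>\<^bsub>SL2_group p\<^esub> y \<in> carrier (SL2_group p)" if "x \<in> carrier (SL2_group p)" "y \<in> carrier (SL2_group p)" for x y
    using that mmul_closed[OF p] by (cases x; cases y) (auto simp: SL2_group_def)
  show "\<one>\<^bsub>SL2_group p\<^esub> \<in> carrier (SL2_group p)" using SL2_one[OF assms] by (simp add: SL2_group_def)
  show "x \<otimes>\<^bsub>SL2_group p\<^esub> y \<otimes>\<^bsub>SL2_group p\<^esub> z = x \<otimes>\<^bsub>SL2_group p\<^esub> (y \<otimes>\<^bsub>SL2_group p\<^esub> z)" for x y z
    by (simp add: SL2_group_def mmul_assoc)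
  show "\<one>\<^bsub>SL2_group p\<^esub> \<otimes>\<^bsub>SL2_group p\<^esub> x = x" if "x \<in> carrier (SL2_group p)" for x
    using that by (cases x) (auto simp: SL2_group_def mmul_def SL2_def)
  show "\<exists>y\<in>carrier (SL2_group p). y \<otimes>\<^bsub>SL2_group p\<^esub> x = \<one>\<^bsub>SL2_group p\<^esub>" if "x \<in> carrier (SL2_group p)" for x
    using that madj_SL2[OF assms] by (cases x) (simp add: SL2_group_def, blast)
qed

lemma Fp2_iff: "(x1,x2) \<in> Fp2 p \<longleftrightarrow> x1 < p \<and> x2 < p" by (simp add: Fp2_def)

lemma finite_Fp2: "finite (Fp2 p)" by (simp add: Fp2_def)

lemma card_Fp2: "card (Fp2 p) = p^2" by (simp add: Fp2_def power2_eq_square)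

lemma affine_in: "p > 0 \<Longrightarrow> x \<in> Fp2 p \<Longrightarrow> affine p M v x \<in> Fp2 p"
  by (cases M; cases v; cases x) (simp add: affine_def Fp2_def)

lemma affine_out: "x \<notin> Fp2 p \<Longrightarrow> affine p M v x = undefined"
  by (simp add: affine_def)

lemma affine_apply: "(x1,x2) \<in> Fp2 p \<Longrightarrow> affine p (a,b,c,d) (v1,v2) (x1,x2) = ((a*x1 + b*x2 + v1) mod p, (c*x1 + d*x2 + v2) mod p)"
  by (simp add: affine_def)

lemma affine_comp:
  assumes p: "p > 0" and x: "x \<in> Fp2 p" and w: "w \<in> Fp2 p"
  shows "affine p M v (affine p N w x) = affine p (mmul p M N) (affine p M v w) x"
proof -
  obtain a b c d where M: "M = (a,b,c,d)" by (cases M) auto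
  obtain e f g h where N: "N = (e,f,g,h)" by (cases N) auto
  obtain v1 v2 where v: "v = (v1,v2)" by (cases v) auto
  obtain w1 w2 where w': "w = (w1,w2)" by (cases w) auto
  obtain x1 x2 where x': "x = (x1,x2)" by (cases x) auto
  have xx: "x1 < p" "x2 < p" using x x' by (auto simp: Fp2_def)
  have ww: "w1 < p" "w2 < p" using w w' by (auto simp: Fp2_def)
  show ?thesis unfolding M N v w' x'
    apply (simp add: affine_apply Fp2_iff xx ww p mmul_def)
    apply (intro conjI mod_eqI_nat)
    apply (simp_all only: zsimps)
    subgoal by Groebner_Basis.algebra
    subgoal by Groebner_Basis.algebra
    done
qed


definition vneg :: "nat \<Rightarrow> nat \<times> nat \<Rightarrow> nat \<times> nat" where
  "vneg p u = ((p - fst u) mod p, (p - snd u) mod p)"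

lemma vneg_in: "p > 0 \<Longrightarrow> vneg p u \<in> Fp2 p" by (simp add: vneg_def Fp2_def)

lemma affine_compose:
  assumes p: "p > 0" and w: "w \<in> Fp2 p"
  shows "compose (Fp2 p) (affine p M v) (affine p N w) = affine p (mmul p M N) (affine p M v w)"
proof
  fix x show "compose (Fp2 p) (affine p M v) (affine p N w) x = affine p (mmul p M N) (affine p M v w) x"
    by (cases "x \<in> Fp2 p") (simp_all add: compose_def affine_comp[OF p _ w] affine_out)
qed

lemma affine_id: "affine p (1,0,0,1) (0,0) = (\<lambda>x\<in>Fp2 p. x)"
  by (auto simp: affine_def Fp2_def fun_eq_iff)

lemma affine_id': "affine p (Suc 0,0,0,Suc 0) (0,0) = (\<lambda>x\<in>Fp2 p. x)"
  using affine_id by simp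

lemma affine_vanish:
  assumes p: "p > 0" and v: "v \<in> Fp2 p"
  shows "affine p M (vneg p (affine p M (0,0) v)) v = (0,0)"
proof -
  obtain a b c d where M: "M = (a,b,c,d)" by (cases M) auto
  obtain v1 v2 where v': "v = (v1,v2)" by (cases v) auto
  have vv: "v1 < p" "v2 < p" using v v' by (auto simp: Fp2_def)
  have l1: "(a*v1 + b*v2) mod p \<le> p" "(c*v1 + d*v2) mod p \<le> p"
    using p by (simp_all add: less_imp_le)
  show ?thesis unfolding M v'
    apply (simp add: affine_apply Fp2_iff vv vneg_def p del: add_0_right)
    apply (intro conjI)
    apply (rule trans[OF mod_eqI_nat mod_0])
    apply (simp only: zsimps)
    apply (simp only: of_nat_diff[OF l1(1)])
    apply (simp only: zsimps of_nat_0)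
    subgoal by Groebner_Basis.algebra
    apply (rule trans[OF mod_eqI_nat mod_0])
    apply (simp only: zsimps)
    apply (simp only: of_nat_diff[OF l1(2)])
    apply (simp only: zsimps of_nat_0)
    subgoal by Groebner_Basis.algebra
    done
qed

lemma affine_groupI: "M \<in> H \<Longrightarrow> v \<in> Fp2 p \<Longrightarrow> affine p M v \<in> affine_group p H"
  unfolding affine_group_def by blast

lemma affine_groupE: "f \<in> affine_group p H \<Longrightarrow> (\<And>M v. f = affine p M v \<Longrightarrow> M \<in> H \<Longrightarrow> v \<in> Fp2 p \<Longrightarrow> P) \<Longrightarrow> P"
  unfolding affine_group_def by blast

context
  fixes p :: nat
  assumes p1: "p > 1"
begin

interpretation G: group "SL2_group p" using SL2_group[OF p1] .

lemma p0: "p > 0" using p1 by simp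

lemma SL2_inv:
  assumes M: "M \<in> SL2 p"
  shows "inv\<^bsub>SL2_group p\<^esub> M \<in> SL2 p" "mmul p (inv\<^bsub>SL2_group p\<^esub> M) M = (1,0,0,1)"
  using G.l_inv[of M] G.inv_closed[of M] M by (simp_all add: SL2_group_def)

lemma affine_Bij:
  assumes M: "M \<in> SL2 p" and v: "v \<in> Fp2 p"
  shows "affine p M v \<in> Bij (Fp2 p)"
proof -
  define M' where "M' = inv\<^bsub>SL2_group p\<^esub> M"
  define v' where "v' = vneg p (affine p M' (0,0) v)"
  have li: "affine p M' v' (affine p M v x) = x" if "x \<in> Fp2 p" for x
    using that SL2_inv[OF M] unfolding M'_def[symmetric] v'_def
    by (simp add: affine_comp[OF p0 that v] affine_vanish[OF p0 v] affine_id')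
  have inj: "inj_on (affine p M v) (Fp2 p)"
    by (metis inj_onI li)
  have sub: "affine p M v ` Fp2 p \<subseteq> Fp2 p" using affine_in[OF p0] by blast
  have "bij_betw (affine p M v) (Fp2 p) (Fp2 p)"
    using endo_inj_surj[OF finite_Fp2 sub inj] inj by (simp add: bij_betw_def)
  moreover have "affine p M v \<in> extensional (Fp2 p)" by (simp add: affine_def)
  ultimately show ?thesis by (simp add: Bij_def)
qed

lemma affine_group_subgroup:
  assumes H: "subgroup H (SL2_group p)"
  shows "subgroup (affine_group p H) (BijGroup (Fp2 p))"
proof -
  interpret B: group "BijGroup (Fp2 p)" by (rule group_BijGroup)
  have HS: "H \<subseteq> SL2 p" using subgroup.subset[OF H] by (simp add: SL2_group_def)
  have mul: "affine p M v \<otimes>\<^bsub>BijGroup (Fp2 p)\<^esub> affine p N w = affine p (mmul p M N) (affine p M v w)"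
    if "M \<in> H" "N \<in> H" "v \<in> Fp2 p" "w \<in> Fp2 p" for M N v w
  proof -
    have "affine p M v \<in> Bij (Fp2 p)" "affine p N w \<in> Bij (Fp2 p)" using that HS affine_Bij by (meson subsetD)+
    then show ?thesis using that by (simp add: BijGroup_def affine_compose[OF p0])
  qed
  show ?thesis
  proof (rule B.subgroupI)
    show "affine_group p H \<subseteq> carrier (BijGroup (Fp2 p))"
      using HS affine_Bij by (auto simp: affine_group_def BijGroup_def)
    have "(1,0,0,1) \<in> H" using subgroup.one_closed[OF H] by (simp add: SL2_group_def)
    moreover have "(0,0) \<in> Fp2 p" using p0 by (simp add: Fp2_def)
    ultimately have "affine p (1,0,0,1) (0,0) \<in> affine_group p H" unfolding affine_group_def by blast
    then show "affine_group p H \<noteq> {}" by blast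
  next
    fix f assume "f \<in> affine_group p H"
    then obtain M v where f: "f = affine p M v" "M \<in> H" "v \<in> Fp2 p" by (auto simp: affine_group_def)
    define M' where "M' = inv\<^bsub>SL2_group p\<^esub> M"
    define v' where "v' = vneg p (affine p M' (0,0) v)"
    have M'H: "M' \<in> H" unfolding M'_def using subgroup.m_inv_closed[OF H f(2)] .
    have v'V: "v' \<in> Fp2 p" unfolding v'_def using vneg_in[OF p0] .
    have "affine p M' v' \<otimes>\<^bsub>BijGroup (Fp2 p)\<^esub> f = \<one>\<^bsub>BijGroup (Fp2 p)\<^esub>"
      using mul[OF M'H f(2) v'V f(3)] SL2_inv[of M] f HS unfolding M'_def[symmetric] v'_def
      by (auto simp: affine_vanish[OF p0] affine_id' BijGroup_def)
    moreover have "f \<in> carrier (BijGroup (Fp2 p))" "affine p M' v' \<in> carrier (BijGroup (Fp2 p))"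
      using HS affine_Bij f M'H v'V by (simp_all add: BijGroup_def subsetD)
    ultimately have "inv\<^bsub>BijGroup (Fp2 p)\<^esub> f = affine p M' v'"
      by (rule B.inv_equality)
    then show "inv\<^bsub>BijGroup (Fp2 p)\<^esub> f \<in> affine_group p H"
      using M'H v'V by (simp add: affine_groupI)
  next
    fix f g assume "f \<in> affine_group p H" "g \<in> affine_group p H"
    then obtain M v N w where "f = affine p M v" "M \<in> H" "v \<in> Fp2 p" "g = affine p N w" "N \<in> H" "w \<in> Fp2 p"
      by (auto simp: affine_group_def)
    moreover have "mmul p M N \<in> H" using subgroup.m_closed[OF H \<open>M \<in> H\<close> \<open>N \<in> H\<close>] by (simp add: SL2_group_def)
    ultimately show "f \<otimes>\<^bsub>BijGroup (Fp2 p)\<^esub> g \<in> affine_group p H"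
      using mul affine_in[OF p0] by (simp add: affine_groupI)
  qed
qed

end


definition vadd :: "nat \<Rightarrow> nat \<times> nat \<Rightarrow> nat \<times> nat \<Rightarrow> nat \<times> nat" where
  "vadd p u w = ((fst u + fst w) mod p, (snd u + snd w) mod p)"

definition vsub :: "nat \<Rightarrow> nat \<times> nat \<Rightarrow> nat \<times> nat \<Rightarrow> nat \<times> nat" where
  "vsub p u w = ((fst u + (p - fst w)) mod p, (snd u + (p - snd w)) mod p)"

definition smul :: "nat \<Rightarrow> nat \<Rightarrow> nat \<times> nat \<Rightarrow> nat \<times> nat" where
  "smul p k u = ((k * fst u) mod p, (k * snd u) mod p)"

lemma vadd_in: "p > 0 \<Longrightarrow> vadd p u w \<in> Fp2 p" by (simp add: vadd_def Fp2_def)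
lemma vsub_in: "p > 0 \<Longrightarrow> vsub p u w \<in> Fp2 p" by (simp add: vsub_def Fp2_def)
lemma smul_in: "p > 0 \<Longrightarrow> smul p k u \<in> Fp2 p" by (simp add: smul_def Fp2_def)

lemma mod_eq_resid: "y < p \<Longrightarrow> int p dvd int x - int y \<Longrightarrow> x mod p = y"
  using mod_eqI_nat[of p x y] by simp

lemma vadd_vsub: assumes "p > 0" "x \<in> Fp2 p" "y \<in> Fp2 p" shows "vadd p (vsub p y x) x = y"
proof -
  obtain x1 x2 y1 y2 where xy: "x = (x1,x2)" "y = (y1,y2)" by (cases x; cases y) auto
  have l: "x1 < p" "x2 < p" "y1 < p" "y2 < p" using assms xy by (auto simp: Fp2_def)
  show ?thesis unfolding xy vadd_def vsub_def fst_conv snd_conv prod.inject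
    apply (intro conjI mod_eq_resid l)
    apply (simp_all only: zsimps of_nat_diff[OF less_imp_le[OF l(1)]] of_nat_diff[OF less_imp_le[OF l(2)]])
    apply (simp_all only: zsimps)?
    subgoal by Groebner_Basis.algebra
    subgoal by Groebner_Basis.algebra
    done
qed

lemma vadd_zero: assumes "x \<in> Fp2 p" shows "vadd p (0,0) x = x"
  using assms by (cases x) (simp add: vadd_def Fp2_def)

lemma affine_transl: assumes "x \<in> Fp2 p" shows "affine p (1,0,0,1) w x = vadd p w x"
  using assms by (cases x; cases w) (simp add: affine_apply vadd_def Fp2_iff add.commute)

lemma vadd_assoc3: assumes "p > 0" shows "vadd p w2 (vadd p w1 x) = vadd p (vadd p w1 w2) x"
  unfolding vadd_def fst_conv snd_conv prod.inject
  by (simp add: mod_simps add.commute add.left_commute)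

lemma affine_fix:
  assumes p: "p > 0" and x: "x \<in> Fp2 p"
  shows "affine p g (vsub p x (affine p g (0,0) x)) x = x"
proof -
  obtain a b c d where g: "g = (a,b,c,d)" by (cases g) auto
  obtain x1 x2 where x': "x = (x1,x2)" by (cases x) auto
  have l: "x1 < p" "x2 < p" using x x' by (auto simp: Fp2_def)
  have m: "(a*x1 + b*x2) mod p \<le> x1 + p" "(c*x1 + d*x2) mod p \<le> x2 + p" using p
    by (metis add.commute le_add2 mod_less_divisor order_trans less_imp_le)+
  have m': "(a*x1 + b*x2) mod p \<le> p" "(c*x1 + d*x2) mod p \<le> p" using p by (simp_all add: less_imp_le)
  show ?thesis unfolding g x'
    apply (simp add: affine_apply Fp2_iff l vsub_def)
    apply (intro conjI mod_eq_resid l)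
    apply (simp_all only: zsimps)
    apply (simp_all only: of_nat_diff[OF m(1)] of_nat_diff[OF m(2)] of_nat_diff[OF m'(1)] of_nat_diff[OF m'(2)])
    apply (simp_all only: zsimps)?
    subgoal by Groebner_Basis.algebra
    subgoal by Groebner_Basis.algebra
    done
qed

lemma affine_fix_shift:
  assumes p: "p > 0" and x: "x \<in> Fp2 p" and w: "w \<in> Fp2 p"
  shows "affine p g (vsub p x (affine p g (0,0) x)) (vadd p w x) = vadd p (affine p g (0,0) w) x"
proof -
  obtain a b c d where g: "g = (a,b,c,d)" by (cases g) auto
  obtain x1 x2 where x': "x = (x1,x2)" by (cases x) auto
  obtain w1 w2 where w': "w = (w1,w2)" by (cases w) auto
  have l: "x1 < p" "x2 < p" "w1 < p" "w2 < p" using x x' w w' by (auto simp: Fp2_def)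
  have m: "(a*x1 + b*x2) mod p \<le> x1 + p" "(c*x1 + d*x2) mod p \<le> x2 + p" using p
    by (metis add.commute le_add2 mod_less_divisor order_trans less_imp_le)+
  have m': "(a*x1 + b*x2) mod p \<le> p" "(c*x1 + d*x2) mod p \<le> p" using p by (simp_all add: less_imp_le)
  show ?thesis unfolding g x' w'
    apply (simp add: affine_apply Fp2_iff l vsub_def vadd_def p)
    apply (intro conjI mod_eqI_nat)
    apply (simp_all only: zsimps)
    apply (simp_all only: of_nat_diff[OF m(1)] of_nat_diff[OF m(2)] of_nat_diff[OF m'(1)] of_nat_diff[OF m'(2)])
    apply (simp_all only: zsimps)?
    subgoal by Groebner_Basis.algebra
    subgoal by Groebner_Basis.algebra
    done
qed


lemma mod_m1: assumes "Z mod p = p - 1" "p > 0" shows "int p dvd int Z + 1"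
proof -
  have "Z mod p = (p - 1) mod p" using assms by simp
  then have "int p dvd int Z - int (p - 1)" by (rule mod_eqD_nat)
  then have "int p dvd int Z - (int p - 1)" using assms(2) by (simp add: of_nat_diff)
  moreover have "int Z - (int p - 1) = int Z - int p + 1" by simp
  ultimately have "int p dvd int Z - int p + 1" by simp
  then have "int p dvd (int Z - int p + 1) + int p" using dvd_add dvd_refl by blast
  moreover have "(int Z - int p + 1) + int p = int Z + 1" by simp
  ultimately show ?thesis by metis
qed

lemma mod_z: assumes "Z mod p = 0" shows "int p dvd int Z"
  using assms by (simp add: mod_0_imp_dvd)

lemma gsq_facts:
  assumes p: "Factorial_Ring.prime p" "p mod 4 = 3"
    and gg: "mmul p (a,b,c,d) (a,b,c,d) = (p-1,0,0,p-1)"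
  shows "int p dvd int a * int a + int b * int c + 1" "int p dvd int a + int d"
proof -
  have p0: "p > 0" using p prime_gt_0_nat by blast
  have e: "(a * a + b * c) mod p = p - 1" "(a * b + b * d) mod p = 0" "(c * a + d * c) mod p = 0"
    using gg by (simp_all add: mmul_def)
  show h1: "int p dvd int a * int a + int b * int c + 1" using mod_m1[OF e(1) p0] by simp
  have h2: "int p dvd int b * (int a + int d)" using mod_z[OF e(2)] by (simp add: algebra_simps)
  have h3: "int p dvd int c * (int a + int d)" using mod_z[OF e(3)] by (simp add: algebra_simps)
  have pr: "Factorial_Ring.prime (int p)" using p by simp
  show "int p dvd int a + int d"
  proof (rule ccontr)
    assume n: "\<not> int p dvd int a + int d"
    then have "int p dvd int b" "int p dvd int c" using h2 h3 pr by (auto simp: prime_dvd_mult_iff)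
    then have "int p dvd int b * int c" by simp
    then have "int p dvd (int a)^2 + 1" using h1 by (metis add.commute add.left_commute dvd_add_right_iff power2_eq_square)
    then show False using minus_one_nonQR[OF p] by blast
  qed
qed

lemma indep:
  fixes a b c d u1 u2 :: int
  assumes p: "Factorial_Ring.prime p" "p mod 4 = 3"
    and h1: "int p dvd a * a + b * c + 1" and had: "int p dvd a + d"
    and hD: "int p dvd u1 * (c*u1 + d*u2) - u2 * (a*u1 + b*u2)"
  shows "int p dvd u1 \<and> int p dvd u2"
proof -
  have pr: "Factorial_Ring.prime (int p)" using p by simp
  have e: "(c*u1 - a*u2)^2 + u2^2 = c * (u1 * (c*u1 + d*u2) - u2 * (a*u1 + b*u2)) - c*u1*u2*(a+d) + (a*a + b * c + 1)*u2^2"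
    by (simp add: algebra_simps power2_eq_square)
  have "int p dvd (c*u1 - a*u2)^2 + u2^2" unfolding e using h1 had hD by (simp add: dvd_diff dvd_add)
  then have s: "int p dvd c*u1 - a*u2" "int p dvd u2" using sumsq_zero[OF p] by blast+
  have "c * u1 = (c*u1 - a*u2) + a * u2" by simp
  moreover have "int p dvd a * u2" using s(2) by (rule dvd_mult)
  ultimately have cu: "int p dvd c * u1" using s(1) by (metis dvd_add)
  have "\<not> int p dvd c"
  proof
    assume "int p dvd c"
    then have "int p dvd b * c" by (rule dvd_mult)
    moreover have "a^2 + 1 = (a*a + b * c + 1) - b * c" by (simp add: power2_eq_square)
    ultimately have "int p dvd a^2 + 1" using h1 by (metis dvd_diff)
    then show False using minus_one_nonQR[OF p] by blast
  qed
  then have "int p dvd u1" using cu pr by (auto simp: prime_dvd_mult_iff)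
  then show ?thesis using s by simp
qed


lemma smul_S:
  assumes z0: "(0,0) \<in> S" and add: "\<And>x y. x \<in> S \<Longrightarrow> y \<in> S \<Longrightarrow> vadd p x y \<in> S" and x: "x \<in> S"
  shows "smul p k x \<in> S"
proof (induction k)
  case 0 then show ?case using z0 by (simp add: smul_def)
next
  case (Suc k)
  have "smul p (Suc k) x = vadd p (smul p k x) x"
    by (simp add: smul_def vadd_def mod_simps add.commute)
  then show ?case using add[OF Suc x] by simp
qed

lemma small_dvd_zero: "(u::nat) < p \<Longrightarrow> int p dvd int u \<Longrightarrow> u = 0"
  by (metis dvd_imp_le int_dvd_int_iff not_le zero_less_iff_neq_zero)

lemma span:
  fixes S and a b c d :: nat
  assumes p: "Factorial_Ring.prime p" "p mod 4 = 3"
    and h1: "int p dvd int a * int a + int b * int c + 1" and had: "int p dvd int a + int d"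
    and S: "S \<subseteq> Fp2 p" and z0: "(0,0) \<in> S" and add: "\<And>x y. x \<in> S \<Longrightarrow> y \<in> S \<Longrightarrow> vadd p x y \<in> S"
    and gcl: "\<And>x. x \<in> S \<Longrightarrow> affine p (a,b,c,d) (0,0) x \<in> S" and u: "u \<in> S" "u \<noteq> (0,0)"
  shows "Fp2 p \<subseteq> S"
proof
  fix y assume y: "y \<in> Fp2 p"
  have p0: "p > 0" using p prime_gt_0_nat by blast
  define P where "P = int p"
  have P0: "P > 0" using p0 P_def by simp
  obtain u1 u2 where u': "u = (u1,u2)" by (cases u) auto
  obtain y1 y2 where y': "y = (y1,y2)" by (cases y) auto
  have ul: "u1 < p" "u2 < p" using u S u' by (auto simp: Fp2_def)
  have yl: "y1 < p" "y2 < p" using y y' by (auto simp: Fp2_def)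
  define w where "w = affine p (a,b,c,d) (0,0) u"
  have wS: "w \<in> S" unfolding w_def using gcl[OF u(1)] .
  obtain w1 w2 where w': "w = (w1,w2)" by (cases w) auto
  have we: "w1 = (a*u1 + b*u2 + 0) mod p" "w2 = (c*u1 + d*u2 + 0) mod p"
    using w' unfolding w_def u' by (simp_all add: affine_apply Fp2_iff ul)
  have wc1: "P dvd int w1 - (int a * int u1 + int b * int u2)"
    unfolding we P_def by (simp only: zsimps) (simp add: algebra_simps)
  have wc2: "P dvd int w2 - (int c * int u1 + int d * int u2)"
    unfolding we P_def by (simp only: zsimps) (simp add: algebra_simps)
  define D where "D = int u1 * int w2 - int u2 * int w1"
  have nD: "\<not> P dvd D"
  proof
    assume hD: "P dvd D"
    have e: "int u1 * (int c * int u1 + int d * int u2) - int u2 * (int a * int u1 + int b * int u2)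
       = D - int u1 * (int w2 - (int c * int u1 + int d * int u2)) + int u2 * (int w1 - (int a * int u1 + int b * int u2))"
      unfolding D_def by (simp add: algebra_simps)
    have "P dvd int u1 * (int c * int u1 + int d * int u2) - int u2 * (int a * int u1 + int b * int u2)"
      unfolding e using hD wc1 wc2 by (simp add: dvd_diff dvd_add dvd_mult)
    then have "P dvd int u1 \<and> P dvd int u2" using indep[OF p] h1 had unfolding P_def by blast
    then have "u1 = 0" "u2 = 0" using small_dvd_zero ul unfolding P_def by blast+
    then show False using u(2) u' by simp
  qed
  have pr: "Factorial_Ring.prime P" using p P_def by simp
  have "coprime P D" using nD pr by (simp add: prime_imp_coprime)
  then have "coprime D P" by (simp add: coprime_commute)
  then obtain z where "[D * z = 1] (mod P)" using cong_solve_coprime_int by blast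
  then have hz: "P dvd D * z - 1" by (simp add: cong_iff_dvd_diff)
  define A where "A = z * (int y1 * int w2 - int y2 * int w1)"
  define B where "B = z * (int u1 * int y2 - int u2 * int y1)"
  define \<alpha> where "\<alpha> = nat (A mod P)"
  define \<beta> where "\<beta> = nat (B mod P)"
  have ha: "int \<alpha> = A - P * (A div P)" unfolding \<alpha>_def using P0
    by (simp add: minus_mult_div_eq_mod)
  have hb: "int \<beta> = B - P * (B div P)" unfolding \<beta>_def using P0
    by (simp add: minus_mult_div_eq_mod)
  have "vadd p (smul p \<alpha> u) (smul p \<beta> w) = y"
    unfolding vadd_def smul_def u' w' y' fst_conv snd_conv prod.inject
    apply (intro conjI mod_eq_resid yl)
    apply (simp_all only: zsimps ha hb flip: P_def)
    subgoal using hz unfolding A_def B_def D_def by Groebner_Basis.algebra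
    subgoal using hz unfolding A_def B_def D_def by Groebner_Basis.algebra
    done
  moreover have "vadd p (smul p \<alpha> u) (smul p \<beta> w) \<in> S"
    using add smul_S[OF z0 add] u(1) wS by blast
  ultimately show "y \<in> S" by simp
qed


lemma affine_transl': "x \<in> Fp2 p \<Longrightarrow> affine p (Suc 0,0,0,Suc 0) w x = vadd p w x"
  using affine_transl by simp

lemma block_stable:
  assumes "is_block V G B" "f \<in> G" "z \<in> B" "f z \<in> B" "z' \<in> B"
  shows "f z' \<in> B"
proof -
  have "f ` B = B \<or> f ` B \<inter> B = {}" using assms(1,2) unfolding is_block_def by blast
  moreover have "f z \<in> f ` B \<inter> B" using assms(3,4) by blast
  ultimately have "f ` B = B" by blast
  then show ?thesis using assms(5) by blast
qed

lemma primitive_affine: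
  assumes p: "Factorial_Ring.prime p" "p mod 4 = 3"
    and I: "(1,0,0,1) \<in> H" and gH: "(a,b,c,d) \<in> H"
    and gg: "mmul p (a,b,c,d) (a,b,c,d) = (p-1,0,0,p-1)"
  shows "primitive (Fp2 p) (affine_group p H)"
proof -
  have p0: "p > 0" using p prime_gt_0_nat by blast
  note h = gsq_facts[OF p gg]
  let ?V = "Fp2 p" and ?G = "affine_group p H"
  have trans: "transitive_on ?V ?G"
    unfolding transitive_on_def
  proof (intro ballI)
    fix x y assume xy: "x \<in> ?V" "y \<in> ?V"
    have "affine p (1,0,0,1) (vsub p y x) \<in> ?G" using I vsub_in[OF p0] by (rule affine_groupI)
    moreover have "affine p (1,0,0,1) (vsub p y x) x = y"
      by (simp only: affine_transl[OF xy(1)] vadd_vsub[OF p0 xy(1) xy(2)])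
    ultimately show "\<exists>g\<in>?G. g x = y" by blast
  qed
  have blocks: "B = ?V" if bl: "is_block ?V ?G B" and c1: "card B \<noteq> 1" for B
  proof -
    have BV: "B \<subseteq> ?V" "B \<noteq> {}" using bl unfolding is_block_def by auto
    then obtain x where x: "x \<in> B" by blast
    have "B \<noteq> {x}" using c1 by auto
    then obtain y where y: "y \<in> B" "y \<noteq> x" using x by blast
    have xV: "x \<in> ?V" and yV: "y \<in> ?V" using x y BV by auto
    define S where "S = {w \<in> ?V. vadd p w x \<in> B}"
    have "?V \<subseteq> S"
    proof (rule span[OF p h(1) h(2)])
      show "S \<subseteq> ?V" unfolding S_def by blast
      show "(0,0) \<in> S" unfolding S_def using x xV p0 by (simp add: vadd_zero Fp2_def)
      show "vadd p w1 w2 \<in> S" if w: "w1 \<in> S" "w2 \<in> S" for w1 w2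
      proof -
        define T where "T = affine p (1,0,0,1) w2"
        have TG: "T \<in> ?G" unfolding T_def using I w(2) S_def by (simp add: affine_groupI)
        have Tx: "T x \<in> B" unfolding T_def using w(2) xV by (simp add: affine_transl' S_def)
        have "T (vadd p w1 x) \<in> B" using w(1) by (intro block_stable[OF bl TG x Tx]) (simp add: S_def)
        moreover have "T (vadd p w1 x) = vadd p (vadd p w1 w2) x"
          unfolding T_def by (simp add: affine_transl' vadd_in[OF p0] vadd_assoc3[OF p0])
        ultimately show ?thesis unfolding S_def using vadd_in[OF p0] by simp
      qed
      show "affine p (a,b,c,d) (0,0) w \<in> S" if w: "w \<in> S" for w
      proof -
        define \<sigma> where "\<sigma> = affine p (a,b,c,d) (vsub p x (affine p (a,b,c,d) (0,0) x))"
        have sG: "\<sigma> \<in> ?G" unfolding \<sigma>_def using gH vsub_in[OF p0] by (rule affine_groupI)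
        have sx: "\<sigma> x \<in> B" unfolding \<sigma>_def using affine_fix[OF p0 xV] x by simp
        have wV: "w \<in> ?V" using w S_def by blast
        have "\<sigma> (vadd p w x) \<in> B" using w by (intro block_stable[OF bl sG x sx]) (simp add: S_def)
        then have "vadd p (affine p (a,b,c,d) (0,0) w) x \<in> B" unfolding \<sigma>_def using affine_fix_shift[OF p0 xV wV] by simp
        then show ?thesis unfolding S_def using affine_in[OF p0 wV] by simp
      qed
      show "vsub p y x \<in> S" unfolding S_def using vsub_in[OF p0] vadd_vsub[OF p0 xV yV] y by simp
      show "vsub p y x \<noteq> (0,0)"
      proof
        assume "vsub p y x = (0,0)"
        then have "vadd p (vsub p y x) x = x" using vadd_zero[OF xV] by simp
        then show False using vadd_vsub[OF p0 xV yV] y by simp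
      qed
    qed
    show "B = ?V"
    proof (rule equalityI)
      show "B \<subseteq> ?V" by (rule BV(1))
      show "?V \<subseteq> B"
      proof
        fix z assume z: "z \<in> ?V"
        have "vsub p z x \<in> S" using \<open>?V \<subseteq> S\<close> vsub_in[OF p0] by blast
        then show "z \<in> B" using vadd_vsub[OF p0 xV z] unfolding S_def by simp
      qed
    qed
  qed
  show ?thesis unfolding primitive_def using trans blocks by metis
qed


lemma resid_pm1: assumes "x < p" "int p dvd int x + 1" shows "x = p - 1"
proof (rule resid_eqI[OF assms(1)])
  show "p - 1 < p" using assms(1) by simp
  have "int (p - 1) = int p - 1" using assms(1) by (simp add: of_nat_diff)
  then have e: "int x - int (p - 1) = (int x + 1) - int p" by simp
  show "int p dvd int x - int (p - 1)" unfolding e by (rule dvd_diff[OF assms(2) dvd_refl])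
qed

lemma resid_1: assumes "x < p" "1 < p" "int p dvd int x - 1" shows "x = 1"
  using resid_eqI[OF assms(1,2)] assms(3) by simp

lemma prime_odd: "Factorial_Ring.prime (p::nat) \<Longrightarrow> p mod 4 = 3 \<Longrightarrow> p > 2"
  using prime_gt_1_nat by (cases "p = 2") auto

lemma not_dvd_2: "p > 2 \<Longrightarrow> \<not> int p dvd 2"
  by (metis int_dvd_int_iff nat_dvd_not_less of_nat_numeral zero_less_numeral)

lemma inv2:
  assumes p: "Factorial_Ring.prime p" "p mod 4 = 3" and h: "(a,b,c,d) \<in> SL2 p"
    and hh: "mmul p (a,b,c,d) (a,b,c,d) = (1,0,0,1)"
  shows "(a,b,c,d) = (1,0,0,1) \<or> (a,b,c,d) = (p-1,0,0,p-1)"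
proof -
  have p2: "p > 2" using prime_odd[OF p] .
  have pr: "Factorial_Ring.prime (int p)" using p by simp
  have det: "int p dvd int a * int d - int b * int c - 1" and l: "a<p" "b<p" "c<p" "d<p"
    using h by (auto simp: SL2_iff)
  have e: "(a * a + b * c) mod p = 1 mod p" "(a * b + b * d) mod p = 0" "(c * a + d * c) mod p = 0"
    using hh p2 by (simp_all add: mmul_def)
  have h1: "int p dvd int a * int a + int b * int c - 1" using mod_eqD_nat[OF e(1)] by simp
  have h2: "int p dvd int b * (int a + int d)" using mod_z[OF e(2)] by (simp add: algebra_simps)
  have h3: "int p dvd int c * (int a + int d)" using mod_z[OF e(3)] by (simp add: algebra_simps)
  have nad: "\<not> int p dvd int a + int d"
  proof
    assume had: "int p dvd int a + int d"
    have "2 = - (int a * int d - int b * int c - 1) - (int a * int a + int b * int c - 1) + int a * (int a + int d)"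
      by (simp add: algebra_simps)
    then have "int p dvd 2" using det h1 had by (metis dvd_diff dvd_add dvd_minus_iff dvd_mult)
    then show False using not_dvd_2[OF p2] by blast
  qed
  have "int p dvd int b" "int p dvd int c" using h2 h3 nad pr by (auto simp: prime_dvd_mult_iff)
  then have b0: "b = 0" and c0: "c = 0" using small_dvd_zero l by blast+
  have "int p dvd (int a - 1) * (int a + 1)" using h1 b0 by (simp add: algebra_simps)
  then have dis: "int p dvd int a - 1 \<or> int p dvd int a + 1" using pr by (simp add: prime_dvd_mult_iff)
  have dd: "int p dvd int a * int d - 1" using det b0 by simp
  from dis show ?thesis
  proof
    assume a1: "int p dvd int a - 1"
    then have "a = 1" using resid_1 l p2 by simp
    then have "d = 1" using dd resid_1 l p2 by simp
    then show ?thesis using \<open>a = 1\<close> b0 c0 by simp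
  next
    assume a1: "int p dvd int a + 1"
    then have "a = p - 1" using resid_pm1 l by simp
    have "int d + 1 = - (int a * int d - 1) + int d * (int a + 1)" by (simp add: algebra_simps)
    then have "int p dvd int d + 1" using dd a1 by (metis dvd_add dvd_minus_iff dvd_mult)
    then have "d = p - 1" using resid_pm1 l by simp
    then show ?thesis using \<open>a = p - 1\<close> b0 c0 by simp
  qed
qed

lemma Q8_pow4: "x \<in> carrier Q8 \<Longrightarrow> q8mult (q8mult x x) (q8mult x x) = (False, 0)"
  apply (cases x)
  apply (auto simp: Q8_def q8mult_def qtab_def less_Suc_eq numeral_eq_Suc)
  done

lemma Q8_idem: "e \<in> carrier Q8 \<Longrightarrow> q8mult e e = e \<Longrightarrow> e = (False, 0)"
  apply (cases e)
  apply (auto simp: Q8_def q8mult_def qtab_def less_Suc_eq numeral_eq_Suc)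
  done

lemma card_Q8: "card (carrier Q8) = 8"
  by (simp add: Q8_def card_cartesian_product)


abbreviation mI :: "nat \<Rightarrow> mat2" where "mI p \<equiv> (p-1,0,0,p-1)"

lemma mI_sq: assumes "p > 1" shows "mmul p (mI p) (mI p) = (1,0,0,1)"
proof -
  have l: "1 \<le> p" using assms by simp
  have "((p - 1) * (p - 1)) mod p = 1"
    apply (rule mod_eq_resid[OF assms])
    apply (simp only: of_nat_mult of_nat_diff[OF l] of_nat_1)
    apply (rule dvdI[where k = "int p - 2"])
    apply (simp add: algebra_simps)
    done
  then show ?thesis by (simp add: mmul_def)
qed

lemma mI_SL2: assumes "p > 1" shows "mI p \<in> SL2 p"
proof -
  have l: "1 \<le> p" using assms by simp
  have "((p - 1) * (p - 1)) mod p = (0 * 0 + 1) mod p"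
    apply (rule mod_eqI_nat)
    apply (simp only: of_nat_mult of_nat_add of_nat_diff[OF l] of_nat_1 of_nat_0)
    apply (rule dvdI[where k = "int p - 2"])
    apply (simp add: algebra_simps)
    done
  then show ?thesis using assms unfolding SL2_def by simp
qed

locale QS =
  fixes p :: nat and Q :: "mat2 set" and g :: mat2
  assumes p: "Factorial_Ring.prime p" "p mod 4 = 3"
    and Qsub: "subgroup Q (SL2_group p)"
    and Qiso: "(SL2_group p)\<lparr>carrier := Q\<rparr> \<cong> Q8"
    and gQ: "g \<in> Q" and gord: "group.ord (SL2_group p) g = 4"
begin

lemma p1: "p > 1" using p prime_gt_1_nat by blast

interpretation G: group "SL2_group p" using SL2_group[OF p1] .

lemma QS: "Q \<subseteq> SL2 p" using subgroup.subset[OF Qsub] by (simp add: SL2_group_def)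
lemma IQ: "(1,0,0,1) \<in> Q" using subgroup.one_closed[OF Qsub] by (simp add: SL2_group_def)
lemma mulQ: "x \<in> Q \<Longrightarrow> y \<in> Q \<Longrightarrow> mmul p x y \<in> Q" using subgroup.m_closed[OF Qsub] by (simp add: SL2_group_def)

lemma Q_pow4: assumes h: "h \<in> Q" shows "mmul p (mmul p h h) (mmul p h h) = (1,0,0,1)"
proof -
  obtain \<phi> where \<phi>: "\<phi> \<in> iso ((SL2_group p)\<lparr>carrier := Q\<rparr>) Q8" using Qiso unfolding is_iso_def by blast
  have hom: "\<And>x y. x \<in> Q \<Longrightarrow> y \<in> Q \<Longrightarrow> \<phi> (mmul p x y) = q8mult (\<phi> x) (\<phi> y)"
    and into: "\<And>x. x \<in> Q \<Longrightarrow> \<phi> x \<in> carrier Q8"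
    and inj: "inj_on \<phi> Q"
    using \<phi> unfolding iso_def hom_def bij_betw_def by (auto simp: SL2_group_def Q8_def)
  have h2: "mmul p h h \<in> Q" using mulQ h by blast
  have "\<phi> (mmul p (mmul p h h) (mmul p h h)) = (False, 0)"
    using hom[OF h2 h2] hom[OF h h] Q8_pow4[OF into[OF h]] by simp
  moreover have "\<phi> (1,0,0,1) = (False, 0)"
  proof (rule Q8_idem[OF into[OF IQ]])
    have "mmul p (1,0,0,1) (1,0,0,1) = (1,0,0,1)" using p1 by (simp add: mmul_def)
    then show "q8mult (\<phi> (1,0,0,1)) (\<phi> (1,0,0,1)) = \<phi> (1,0,0,1)" using hom[OF IQ IQ] by simp
  qed
  ultimately show ?thesis using inj mulQ[OF h2 h2] IQ by (metis inj_onD)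
qed

lemma Q_class: assumes h: "h \<in> Q" shows "h = (1,0,0,1) \<or> h = mI p \<or> mmul p h h = mI p"
proof -
  have h2: "mmul p h h \<in> SL2 p" using mulQ[OF h h] QS by blast
  obtain a b c d where e2: "mmul p h h = (a,b,c,d)" by (cases "mmul p h h") auto
  have "(a,b,c,d) = (1,0,0,1) \<or> (a,b,c,d) = mI p"
    using inv2[OF p, of a b c d] h2 Q_pow4[OF h] e2 by simp
  then show ?thesis
  proof
    assume "(a,b,c,d) = (1,0,0,1)"
    moreover obtain a' b' c' d' where e: "h = (a',b',c',d')" by (cases h) auto
    ultimately show ?thesis using inv2[OF p, of a' b' c' d'] h QS e2 by auto
  qed (simp add: e2)
qed

lemma g_sq: "mmul p g g = mI p"
proof -
  have gS: "g \<in> carrier (SL2_group p)" using gQ QS by (simp add: SL2_group_def subsetD)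
  have "g \<noteq> (1,0,0,1)"
  proof
    assume "g = (1,0,0,1)"
    then have "g = \<one>\<^bsub>SL2_group p\<^esub>" by (simp add: SL2_group_def)
    then show False using gord by simp
  qed
  moreover have "g \<noteq> mI p"
  proof
    assume "g = mI p"
    have "g [^]\<^bsub>SL2_group p\<^esub> (2::nat) = g \<otimes>\<^bsub>SL2_group p\<^esub> g"
      using G.l_one[OF gS] by (simp add: numeral_2_eq_2)
    also have "\<dots> = \<one>\<^bsub>SL2_group p\<^esub>" using mI_sq[OF p1] \<open>g = mI p\<close> by (simp add: SL2_group_def)
    finally have "g [^]\<^bsub>SL2_group p\<^esub> (2::nat) = \<one>\<^bsub>SL2_group p\<^esub>" .
    then have "G.ord g dvd 2" using G.pow_eq_id[OF gS] by blast
    then show False using gord by simp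
  qed
  ultimately show ?thesis using Q_class[OF gQ] by blast
qed

lemma card_Q: "card Q = 8"
proof -
  obtain \<phi> where \<phi>: "\<phi> \<in> iso ((SL2_group p)\<lparr>carrier := Q\<rparr>) Q8" using Qiso unfolding is_iso_def by blast
  then have "bij_betw \<phi> Q (carrier Q8)" unfolding iso_def by simp
  then show ?thesis using card_Q8 bij_betw_same_card by metis
qed

definition "Gg = generate (SL2_group p) {g}"

lemma card_Gg: "card Gg = 4"
  using G.generate_pow_card[of g] gQ QS gord unfolding Gg_def by (simp add: SL2_group_def subsetD)

lemma Gg_sub: "subgroup Gg (SL2_group p)"
  unfolding Gg_def using gQ QS by (intro G.generate_is_subgroup) (auto simp: SL2_group_def)

lemma Gg_Q: "Gg \<subseteq> Q"
  unfolding Gg_def using gQ by (intro G.generate_subgroup_incl Qsub) auto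

lemma Gg_mem: "(1,0,0,1) \<in> Gg" "g \<in> Gg" "mI p \<in> Gg"
proof -
  show "(1,0,0,1) \<in> Gg" unfolding Gg_def using generate.one[of "SL2_group p" "{g}"] by (simp add: SL2_group_def)
  show gG: "g \<in> Gg" unfolding Gg_def by (rule generate.incl) simp
  show "mI p \<in> Gg" using generate.eng[OF gG[unfolded Gg_def] gG[unfolded Gg_def]] g_sq unfolding Gg_def by (simp add: SL2_group_def)
qed

end


lemma cycle_of_4:
  assumes fV: "\<And>y. y \<in> V \<Longrightarrow> f y \<in> V" and f4: "\<And>y. y \<in> V \<Longrightarrow> f (f (f (f y))) = y" and x: "x \<in> V"
  shows "cycle_of f x = {x, f x, f (f x), f (f (f x))}"
proof
  have "(f ^^ n) x \<in> {x, f x, f (f x), f (f (f x))}" for n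
  proof (induction n)
    case 0 then show ?case by simp
  next
    case (Suc n)
    then show ?case using f4[OF x] by auto
  qed
  then show "cycle_of f x \<subseteq> {x, f x, f (f x), f (f (f x))}" unfolding cycle_of_def by blast
  have "x = (f^^0) x" "f x = (f^^1) x" "f (f x) = (f^^2) x" "f (f (f x)) = (f^^3) x"
    by (simp_all add: numeral_eq_Suc)
  then show "{x, f x, f (f x), f (f (f x))} \<subseteq> cycle_of f x" unfolding cycle_of_def by blast
qed

lemma arith4: "(n::nat) mod 4 = 1 \<Longrightarrow> k \<le> 1 \<Longrightarrow> n - k = 4 * m \<Longrightarrow> k = 1"
  by presburger

lemma cycle_struct:
  fixes V :: "'a set" and f :: "'a \<Rightarrow> 'a"
  assumes fin: "finite V"
    and fV: "\<And>y. y \<in> V \<Longrightarrow> f y \<in> V" and f4: "\<And>y. y \<in> V \<Longrightarrow> f (f (f (f y))) = y"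
    and fix1: "\<And>x y. x \<in> V \<Longrightarrow> y \<in> V \<Longrightarrow> f x = x \<Longrightarrow> f y = y \<Longrightarrow> x = y"
    and f2: "\<And>x. x \<in> V \<Longrightarrow> f (f x) = x \<Longrightarrow> f x = x"
    and cV: "card V mod 4 = 1"
  shows "cycle_type V f = {#1#} + replicate_mset ((card V - 1) div 4) 4"
proof -
  define cyc where "cyc x = {x, f x, f (f x), f (f (f x))}" for x
  have cyc: "cycle_of f x = cyc x" if "x \<in> V" for x unfolding cyc_def using cycle_of_4[OF fV f4 that] .
  have cycV: "cyc x \<subseteq> V" if "x \<in> V" for x unfolding cyc_def using fV that by blast
  have same: "cyc z = cyc x" if "x \<in> V" "z \<in> cyc x" for x z
  proof -
    have V: "f x \<in> V" "f (f x) \<in> V" "f (f (f x)) \<in> V" using fV that(1) by blast+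
    have e1: "f (f (f (f x))) = x" using f4[OF that(1)] .
    have e2: "f (f (f (f (f x)))) = f x" using e1 by simp
    have e3: "f (f (f (f (f (f x))))) = f (f x)" using e1 by simp
    from that(2) consider "z = x" | "z = f x" | "z = f (f x)" | "z = f (f (f x))" unfolding cyc_def by blast
    then show ?thesis
    proof cases
      case 1 then show ?thesis by simp
    next
      case 2 then have "cyc z = {f x, f (f x), f (f (f x)), x}" unfolding cyc_def using e1 by simp
      then show ?thesis unfolding cyc_def by blast
    next
      case 3 then have "cyc z = {f (f x), f (f (f x)), x, f x}" unfolding cyc_def using e1 e2 by simp
      then show ?thesis unfolding cyc_def by blast
    next
      case 4 then have "cyc z = {f (f (f x)), x, f x, f (f x)}" unfolding cyc_def using e1 e2 e3 by simp
      then show ?thesis unfolding cyc_def by blast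
    qed
  qed
  define F where "F = {x \<in> V. f x = x}"
  have cycF: "cyc x = {x}" if "x \<in> F" for x using that unfolding cyc_def F_def by auto
  have card4: "card (cyc x) = 4" if "x \<in> V - F" for x
  proof -
    have x: "x \<in> V" "f x \<noteq> x" using that F_def by auto
    have V: "f x \<in> V" "f (f x) \<in> V" "f (f (f x)) \<in> V" using fV x(1) by blast+
    have n2: "f (f x) \<noteq> x" using f2 x by blast
    have n3: "f (f (f x)) \<noteq> x" using x f4[OF x(1)] by metis
    have n12: "f x \<noteq> f (f x)" using x f4[OF x(1)] f4[OF V(1)] by metis
    have n13: "f x \<noteq> f (f (f x))" using n2 f4[OF x(1)] f4[OF V(2)] by metis
    have n23: "f (f x) \<noteq> f (f (f x))" using x f4[OF x(1)] f4[OF V(1)] by metis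
    show ?thesis unfolding cyc_def using x(2) n2 n3 n12 n13 n23 by (simp add: card_insert_if)
  qed
  have "{cycle_of f x | x. x \<in> V} = cyc ` V"
  proof (intro equalityI subsetI)
    fix A assume "A \<in> {cycle_of f x | x. x \<in> V}"
    then obtain x where "A = cycle_of f x" "x \<in> V" by blast
    then show "A \<in> cyc ` V" using cyc by simp
  next
    fix A assume "A \<in> cyc ` V"
    then obtain x where "A = cyc x" "x \<in> V" by blast
    then have "A = cycle_of f x" "x \<in> V" using cyc by simp_all
    then show "A \<in> {cycle_of f x | x. x \<in> V}" by blast
  qed
  also have "cyc ` V = cyc ` F \<union> cyc ` (V - F)" unfolding F_def by blast
  finally have C: "{cycle_of f x | x. x \<in> V} = cyc ` F \<union> cyc ` (V - F)" .
  have finF: "finite F" unfolding F_def using fin by simp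
  have fin1: "finite (cyc ` F)" "finite (cyc ` (V - F))" using finF fin by simp_all
  have disj: "cyc ` F \<inter> cyc ` (V - F) = {}"
  proof (rule equals0I)
    fix A assume A: "A \<in> cyc ` F \<inter> cyc ` (V - F)"
    then obtain x y where xy: "x \<in> F" "A = cyc x" "y \<in> V - F" "A = cyc y" by blast
    have "card A = 1" using xy(1,2) cycF by simp
    moreover have "card A = 4" using xy(3,4) card4 by simp
    ultimately show False by simp
  qed
  have cF: "card F \<le> 1"
  proof -
    have "\<forall>x\<in>F. \<forall>y\<in>F. x = y" using fix1 unfolding F_def by blast
    then show ?thesis using card_le_Suc0_iff_eq[OF finF] by simp
  qed
  have c1: "card (cyc ` F) = card F"
  proof (rule card_image)
    show "inj_on cyc F" using cycF by (simp add: inj_on_def)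
  qed
  have U: "\<Union> (cyc ` (V - F)) = V - F"
  proof
    show "\<Union> (cyc ` (V - F)) \<subseteq> V - F"
    proof
      fix z assume "z \<in> \<Union> (cyc ` (V - F))"
      then obtain x where x: "x \<in> V - F" "z \<in> cyc x" by blast
      have zV: "z \<in> V" using cycV x by blast
      have "z \<notin> F"
      proof
        assume "z \<in> F"
        then have "cyc x = {z}" using same[of x z] x cycF by auto
        then show False using card4[OF x(1)] by simp
      qed
      then show "z \<in> V - F" using zV by blast
    qed
    show "V - F \<subseteq> \<Union> (cyc ` (V - F))" unfolding cyc_def by blast
  qed
  have pd: "pairwise disjnt (cyc ` (V - F))"
  proof (rule pairwiseI)
    fix A B assume AB: "A \<in> cyc ` (V - F)" "B \<in> cyc ` (V - F)" "A \<noteq> B"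
    then obtain x y where "x \<in> V" "y \<in> V" "A = cyc x" "B = cyc y" by blast
    then show "disjnt A B" using same AB(3) unfolding disjnt_def by blast
  qed
  have finc: "finite (cyc x)" for x unfolding cyc_def by simp
  have "card (\<Union> (cyc ` (V - F))) = sum card (cyc ` (V - F))"
    by (rule card_Union_disjoint[OF pd]) (auto simp: finc)
  also have "\<dots> = sum (\<lambda>_. 4) (cyc ` (V - F))"
  proof (rule sum.cong[OF refl])
    fix A assume "A \<in> cyc ` (V - F)"
    then obtain x where "x \<in> V - F" "A = cyc x" by blast
    then show "card A = 4" using card4 by simp
  qed
  also have "\<dots> = 4 * card (cyc ` (V - F))" by simp
  finally have c2: "card (V - F) = 4 * card (cyc ` (V - F))" unfolding U .
  have FV: "F \<subseteq> V" unfolding F_def by blast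
  have cd: "card (V - F) = card V - card F" using card_Diff_subset[OF finF FV] .
  have cF1: "card F = 1" using arith4[OF cV cF, of "card (cyc ` (V - F))"] c2 cd by simp
  have c2': "card (cyc ` (V - F)) = (card V - 1) div 4" using c2 cF1 cd by simp
  have m1: "image_mset card (mset_set (cyc ` F)) = image_mset (\<lambda>_. 1) (mset_set (cyc ` F))"
  proof (rule image_mset_cong)
    fix A assume "A \<in># mset_set (cyc ` F)"
    then have "A \<in> cyc ` F" using fin1(1) by simp
    then obtain x where "x \<in> F" "A = cyc x" by blast
    then show "card A = 1" using cycF by simp
  qed
  have m2: "image_mset card (mset_set (cyc ` (V - F))) = image_mset (\<lambda>_. 4) (mset_set (cyc ` (V - F)))"
  proof (rule image_mset_cong)
    fix A assume "A \<in># mset_set (cyc ` (V - F))"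
    then have "A \<in> cyc ` (V - F)" using fin1(2) by simp
    then obtain x where "x \<in> V - F" "A = cyc x" by blast
    then show "card A = 4" using card4 by simp
  qed
  have "cycle_type V f = image_mset card (mset_set (cyc ` F)) + image_mset card (mset_set (cyc ` (V - F)))"
    unfolding cycle_type_def C mset_set_Union[OF fin1 disj] by simp
  also have "\<dots> = replicate_mset (card F) 1 + replicate_mset (card (cyc ` (V - F))) 4"
    unfolding m1 m2 image_mset_const_eq using c1 by simp
  finally show ?thesis using cF1 c2' by simp
qed


lemma aff_cong:
  assumes "(x1,x2) \<in> Fp2 p" "affine p (a,b,c,d) (v1,v2) (x1,x2) = (y1,y2)"
  shows "int p dvd int y1 - (int a * int x1 + int b * int x2 + int v1)"
        "int p dvd int y2 - (int c * int x1 + int d * int x2 + int v2)"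
proof -
  have e: "y1 = (a*x1 + b*x2 + v1) mod p" "y2 = (c*x1 + d*x2 + v2) mod p"
    using assms by (simp_all add: affine_apply)
  show "int p dvd int y1 - (int a * int x1 + int b * int x2 + int v1)"
    unfolding e(1) by (simp only: zsimps) (simp add: algebra_simps)
  show "int p dvd int y2 - (int c * int x1 + int d * int x2 + int v2)"
    unfolding e(2) by (simp only: zsimps) (simp add: algebra_simps)
qed

lemma p2_mod4: "p mod 4 = (3::nat) \<Longrightarrow> p^2 mod 4 = 1"
proof -
  assume h: "p mod 4 = 3"
  have "p^2 mod 4 = (p mod 4)^2 mod 4" by (simp add: power_mod)
  then show ?thesis using h by simp
qed

context
  fixes p a b c d v1 v2 :: nat
  assumes p: "Factorial_Ring.prime p" "p mod 4 = 3"
    and MM: "mmul p (a,b,c,d) (a,b,c,d) = (p-1,0,0,p-1)"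
    and v: "(v1,v2) \<in> Fp2 p"
begin

definition "ff = affine p (a,b,c,d) (v1,v2)"

lemma pp0: "p > 0" using p prime_gt_0_nat by blast

lemma Mfacts: "int p dvd int a * int a + int b * int c + 1" "int p dvd int a * int b + int b * int d"
   "int p dvd int c * int a + int d * int c" "int p dvd int c * int b + int d * int d + 1"
proof -
  have e: "(a * a + b * c) mod p = p - 1" "(a * b + b * d) mod p = 0" "(c * a + d * c) mod p = 0" "(c * b + d * d) mod p = p - 1"
    using MM by (simp_all add: mmul_def)
  show "int p dvd int a * int a + int b * int c + 1" using mod_m1[OF e(1) pp0] by simp
  show "int p dvd int a * int b + int b * int d" using mod_z[OF e(2)] by simp
  show "int p dvd int c * int a + int d * int c" using mod_z[OF e(3)] by simp
  show "int p dvd int c * int b + int d * int d + 1" using mod_m1[OF e(4) pp0] by simp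
qed

lemma ff_in: "x \<in> Fp2 p \<Longrightarrow> ff x \<in> Fp2 p" unfolding ff_def using affine_in[OF pp0] .

lemma ff2:
  assumes x: "(x1,x2) \<in> Fp2 p" and z: "ff (ff (x1,x2)) = (z1,z2)"
  shows "int p dvd int z1 + int x1 - (int a * int v1 + int b * int v2 + int v1)"
        "int p dvd int z2 + int x2 - (int c * int v1 + int d * int v2 + int v2)"
proof -
  obtain y1 y2 where y: "ff (x1,x2) = (y1,y2)" by (cases "ff (x1,x2)") auto
  have yV: "(y1,y2) \<in> Fp2 p" using ff_in[OF x] y by simp
  note hy = aff_cong[OF x y[unfolded ff_def]]
  note hz = aff_cong[OF yV z[unfolded y, unfolded ff_def]]
  note e = Mfacts
  show "int p dvd int z1 + int x1 - (int a * int v1 + int b * int v2 + int v1)"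
    using hy hz(1) e(1) e(2) by Groebner_Basis.algebra
  show "int p dvd int z2 + int x2 - (int c * int v1 + int d * int v2 + int v2)"
    using hy hz(2) e(3) e(4) by Groebner_Basis.algebra
qed

lemma ff4: assumes x: "x \<in> Fp2 p" shows "ff (ff (ff (ff x))) = x"
proof -
  obtain x1 x2 where x': "x = (x1,x2)" by (cases x) auto
  obtain z1 z2 where z: "ff (ff (x1,x2)) = (z1,z2)" by (cases "ff (ff (x1,x2))") auto
  obtain t1 t2 where t: "ff (ff (z1,z2)) = (t1,t2)" by (cases "ff (ff (z1,z2))") auto
  have xV: "(x1,x2) \<in> Fp2 p" using x x' by simp
  have zV: "(z1,z2) \<in> Fp2 p" using ff_in[OF ff_in[OF xV]] z by simp
  have tV: "(t1,t2) \<in> Fp2 p" using ff_in[OF ff_in[OF zV]] t by simp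
  note h1 = ff2[OF xV z] and h2 = ff2[OF zV t]
  have "int p dvd int t1 - int x1" using dvd_diff[OF h2(1) h1(1)] by (simp add: algebra_simps)
  then have "t1 = x1" using tV xV by (intro resid_eqI) (auto simp: Fp2_def)
  moreover have "int p dvd int t2 - int x2" using dvd_diff[OF h2(2) h1(2)] by (simp add: algebra_simps)
  then have "t2 = x2" using tV xV by (intro resid_eqI) (auto simp: Fp2_def)
  ultimately show ?thesis using x' z t by simp
qed

lemma two_dvd: assumes "int p dvd 2 * e" shows "int p dvd e"
proof -
  have pr: "Factorial_Ring.prime (int p)" using p by simp
  have "\<not> int p dvd 2" using not_dvd_2 prime_odd[OF p] by blast
  then show ?thesis using assms pr by (simp add: prime_dvd_mult_iff)
qed

lemma fix1: assumes x: "x \<in> Fp2 p" and y: "y \<in> Fp2 p" and fx: "ff x = x" and fy: "ff y = y" shows "x = y"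
proof -
  obtain x1 x2 where x': "x = (x1,x2)" by (cases x) auto
  obtain y1 y2 where y': "y = (y1,y2)" by (cases y) auto
  note hx = aff_cong[OF x[unfolded x'] fx[unfolded x' ff_def]]
  note hy = aff_cong[OF y[unfolded y'] fy[unfolded y' ff_def]]
  note e = Mfacts
  have "int p dvd 2 * (int x1 - int y1)" using hx hy e(1) e(2) by Groebner_Basis.algebra
  then have "int p dvd int x1 - int y1" by (rule two_dvd)
  then have "x1 = y1" using x y x' y' by (intro resid_eqI) (auto simp: Fp2_def)
  moreover have "int p dvd 2 * (int x2 - int y2)" using hx hy e(3) e(4) by Groebner_Basis.algebra
  then have "int p dvd int x2 - int y2" by (rule two_dvd)
  then have "x2 = y2" using x y x' y' by (intro resid_eqI) (auto simp: Fp2_def)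
  ultimately show ?thesis using x' y' by simp
qed

lemma f2: assumes x: "x \<in> Fp2 p" and fx: "ff (ff x) = x" shows "ff x = x"
proof -
  obtain x1 x2 where x': "x = (x1,x2)" by (cases x) auto
  obtain y1 y2 where y': "ff x = (y1,y2)" by (cases "ff x") auto
  have y: "(y1,y2) \<in> Fp2 p" using ff_in[OF x] y' by simp
  note hx = aff_cong[OF x[unfolded x'] y'[unfolded x' ff_def]]
  note hy = aff_cong[OF y fx[unfolded y', unfolded x' ff_def]]
  note e = Mfacts
  have "int p dvd 2 * (int x1 - int y1)" using hx hy e(1) e(2) by Groebner_Basis.algebra
  then have "int p dvd int x1 - int y1" by (rule two_dvd)
  then have "x1 = y1" using x y x' by (intro resid_eqI) (auto simp: Fp2_def)
  moreover have "int p dvd 2 * (int x2 - int y2)" using hx hy e(3) e(4) by Groebner_Basis.algebra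
  then have "int p dvd int x2 - int y2" by (rule two_dvd)
  then have "x2 = y2" using x y x' by (intro resid_eqI) (auto simp: Fp2_def)
  ultimately show ?thesis using x' y' by simp
qed

lemma ct_ff: "cycle_type (Fp2 p) ff = {#1#} + replicate_mset ((p^2 - 1) div 4) 4"
proof -
  have "cycle_type (Fp2 p) ff = {#1#} + replicate_mset ((card (Fp2 p) - 1) div 4) 4"
  proof (rule cycle_struct)
    show "finite (Fp2 p)" by (rule finite_Fp2)
    show "card (Fp2 p) mod 4 = 1" using p2_mod4[OF p(2)] card_Fp2 by simp
    show "\<And>y. y \<in> Fp2 p \<Longrightarrow> ff y \<in> Fp2 p" by (rule ff_in)
    show "\<And>y. y \<in> Fp2 p \<Longrightarrow> ff (ff (ff (ff y))) = y" by (rule ff4)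
    show "\<And>x y. x \<in> Fp2 p \<Longrightarrow> y \<in> Fp2 p \<Longrightarrow> ff x = x \<Longrightarrow> ff y = y \<Longrightarrow> x = y" by (rule fix1)
    show "\<And>x. x \<in> Fp2 p \<Longrightarrow> ff (ff x) = x \<Longrightarrow> ff x = x" by (rule f2)
  qed
  then show ?thesis by (simp add: card_Fp2)
qed

end


lemma affine_inj:
  assumes p1: "p > 1" and M: "M \<in> SL2 p" "M' \<in> SL2 p" and v: "v \<in> Fp2 p" "v' \<in> Fp2 p"
    and eq: "affine p M v = affine p M' v'"
  shows "M = M' \<and> v = v'"
proof -
  obtain a b c d where M1: "M = (a,b,c,d)" by (cases M) auto
  obtain a' b' c' d' where M2: "M' = (a',b',c',d')" by (cases M') auto
  obtain v1 v2 where v1: "v = (v1,v2)" by (cases v) auto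
  obtain v1' v2' where v2: "v' = (v1',v2')" by (cases v') auto
  have l: "a<p" "b<p" "c<p" "d<p" "a'<p" "b'<p" "c'<p" "d'<p" "v1<p" "v2<p" "v1'<p" "v2'<p"
    using M v M1 M2 v1 v2 by (auto simp: SL2_iff Fp2_def)
  have pts: "(0,0) \<in> Fp2 p" "(1,0) \<in> Fp2 p" "(0,1) \<in> Fp2 p" using p1 by (auto simp: Fp2_def)
  have e0: "affine p M v (0,0) = affine p M' v' (0,0)" using eq by simp
  then have vv: "v1 = v1'" "v2 = v2'" using pts l unfolding M1 M2 v1 v2 by (simp_all add: affine_apply)
  have e1: "affine p M v (1,0) = affine p M' v' (1,0)" using eq by simp
  then have "(a + v1) mod p = (a' + v1) mod p" "(c + v2) mod p = (c' + v2) mod p"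
    using pts unfolding M1 M2 v1 v2 vv by (simp_all add: affine_apply)
  then have "int p dvd int a - int a'" "int p dvd int c - int c'"
    using mod_eqD_nat by fastforce+
  then have ac: "a = a'" "c = c'" using l by (simp_all add: resid_eq_iff)
  have e2: "affine p M v (0,1) = affine p M' v' (0,1)" using eq by simp
  then have "(b + v1) mod p = (b' + v1) mod p" "(d + v2) mod p = (d' + v2) mod p"
    using pts unfolding M1 M2 v1 v2 vv by (simp_all add: affine_apply)
  then have "int p dvd int b - int b'" "int p dvd int d - int d'"
    using mod_eqD_nat by fastforce+
  then have bd: "b = b'" "d = d'" using l by (simp_all add: resid_eq_iff)
  show ?thesis using ac bd vv M1 M2 v1 v2 by simp
qed

lemma card_affine_group:
  assumes p1: "p > 1" and H: "H \<subseteq> SL2 p"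
  shows "card (affine_group p H) = card H * p^2"
proof -
  have e: "affine_group p H = (\<lambda>(M,v). affine p M v) ` (H \<times> Fp2 p)"
  proof (intro equalityI subsetI)
    fix f assume "f \<in> affine_group p H"
    then obtain M v where "f = affine p M v" "M \<in> H" "v \<in> Fp2 p" by (rule affine_groupE)
    then show "f \<in> (\<lambda>(M,v). affine p M v) ` (H \<times> Fp2 p)" by (simp add: image_iff) blast
  next
    fix f assume "f \<in> (\<lambda>(M,v). affine p M v) ` (H \<times> Fp2 p)"
    then obtain x where x: "x \<in> H \<times> Fp2 p" "f = (\<lambda>(M,v). affine p M v) x" by blast
    obtain M v where "x = (M,v)" by (cases x) auto
    then show "f \<in> affine_group p H" using x by (simp add: affine_groupI)
  qed
  have "inj_on (\<lambda>(M,v). affine p M v) (H \<times> Fp2 p)"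
  proof (rule inj_onI)
    fix x y assume xy: "x \<in> H \<times> Fp2 p" "y \<in> H \<times> Fp2 p" "(\<lambda>(M,v). affine p M v) x = (\<lambda>(M,v). affine p M v) y"
    obtain M v where x: "x = (M,v)" by (cases x) auto
    obtain M' v' where y: "y = (M',v')" by (cases y) auto
    have "M = M' \<and> v = v'" using xy H x y by (intro affine_inj[OF p1]) auto
    then show "x = y" using x y by simp
  qed
  then have "card (affine_group p H) = card (H \<times> Fp2 p)" unfolding e by (rule card_image)
  also have "\<dots> = card H * p^2" by (simp add: card_cartesian_product card_Fp2)
  finally show ?thesis .
qed

theorem mainTheorem13:
  fixes p :: nat and Q :: "mat2 set" and g :: mat2
  assumes "Factorial_Ring.prime p" and "p mod 4 = 3"
    and "subgroup Q (SL2_group p)"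
    and "(SL2_group p)\<lparr>carrier := Q\<rparr> \<cong> Q8"
    and "g \<in> Q" and "group.ord (SL2_group p) g = 4"
  shows "card (Fp2 p) = p ^ 2
    \<and> subgroup (affine_group p Q) (BijGroup (Fp2 p))
    \<and> subgroup (affine_group p (generate (SL2_group p) {g})) (BijGroup (Fp2 p))
    \<and> primitive (Fp2 p) (affine_group p Q)
    \<and> primitive (Fp2 p) (affine_group p (generate (SL2_group p) {g}))
    \<and> \<not> (perm_group (Fp2 p) (affine_group p Q)
           \<cong> perm_group (Fp2 p) (affine_group p (generate (SL2_group p) {g})))
    \<and> spectrum_perm (Fp2 p) (affine_group p Q)
        = spectrum_perm (Fp2 p) (affine_group p (generate (SL2_group p) {g}))"
proof -
  interpret QS p Q g using assms unfolding QS_def by blast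
  have gen: "generate (SL2_group p) {g} = Gg" unfolding Gg_def ..
  have p1': "p > 1" using p1 .
  have p0: "p > 0" using p1 by simp
  obtain a b c d where g': "g = (a,b,c,d)" by (cases g) auto
  have gsq: "mmul p (a,b,c,d) (a,b,c,d) = (p-1,0,0,p-1)" using g_sq g' by simp
  have GgS: "Gg \<subseteq> SL2 p" using Gg_Q QS by blast
  have s1: "subgroup (affine_group p Q) (BijGroup (Fp2 p))" using affine_group_subgroup[OF p1' Qsub] .
  have s2: "subgroup (affine_group p Gg) (BijGroup (Fp2 p))" using affine_group_subgroup[OF p1' Gg_sub] .
  have pr1: "primitive (Fp2 p) (affine_group p Q)"
    using primitive_affine[OF p IQ _ gsq] gQ g' by simp
  have pr2: "primitive (Fp2 p) (affine_group p Gg)"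
    using primitive_affine[OF p Gg_mem(1) _ gsq] Gg_mem(2) g' by simp
  have cQ: "card (affine_group p Q) = 8 * p^2" using card_affine_group[OF p1' QS] card_Q by simp
  have cG: "card (affine_group p Gg) = 4 * p^2" using card_affine_group[OF p1' GgS] card_Gg by simp
  have niso: "\<not> (perm_group (Fp2 p) (affine_group p Q) \<cong> perm_group (Fp2 p) (affine_group p Gg))"
  proof
    assume "perm_group (Fp2 p) (affine_group p Q) \<cong> perm_group (Fp2 p) (affine_group p Gg)"
    then obtain h where "h \<in> iso (perm_group (Fp2 p) (affine_group p Q)) (perm_group (Fp2 p) (affine_group p Gg))"
      unfolding is_iso_def by blast
    then have "bij_betw h (affine_group p Q) (affine_group p Gg)"
      unfolding iso_def perm_group_def by simp
    then have "card (affine_group p Q) = card (affine_group p Gg)" by (rule bij_betw_same_card)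
    then show False using cQ cG p0 by simp
  qed
  have sub: "affine_group p Gg \<subseteq> affine_group p Q"
    using Gg_Q by (auto elim!: affine_groupE intro!: affine_groupI)
  have spec: "cycle_type (Fp2 p) ` affine_group p Q = cycle_type (Fp2 p) ` affine_group p Gg"
  proof
    show "cycle_type (Fp2 p) ` affine_group p Gg \<subseteq> cycle_type (Fp2 p) ` affine_group p Q"
      using sub by blast
    show "cycle_type (Fp2 p) ` affine_group p Q \<subseteq> cycle_type (Fp2 p) ` affine_group p Gg"
    proof
      fix t assume "t \<in> cycle_type (Fp2 p) ` affine_group p Q"
      then obtain f where f: "f \<in> affine_group p Q" "t = cycle_type (Fp2 p) f" by blast
      then obtain M v where fM: "f = affine p M v" "M \<in> Q" "v \<in> Fp2 p" by (auto elim: affine_groupE)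
      consider "M = (1,0,0,1)" | "M = mI p" | "mmul p M M = mI p" using Q_class[OF fM(2)] by blast
      then show "t \<in> cycle_type (Fp2 p) ` affine_group p Gg"
      proof cases
        case 1
        then have "f \<in> affine_group p Gg" using fM Gg_mem(1) by (simp add: affine_groupI)
        then show ?thesis using f by blast
      next
        case 2
        then have "f \<in> affine_group p Gg" using fM Gg_mem(3) by (simp add: affine_groupI)
        then show ?thesis using f by blast
      next
        case 3
        obtain m1 m2 m3 m4 where M': "M = (m1,m2,m3,m4)" by (cases M) auto
        obtain v1 v2 where v': "v = (v1,v2)" by (cases v) auto
        have m3: "mmul p (m1,m2,m3,m4) (m1,m2,m3,m4) = mI p" using 3 M' by simp
        have v3: "(v1,v2) \<in> Fp2 p" using fM v' by simp
        have z3: "(0,0) \<in> Fp2 p" using p0 by (simp add: Fp2_def)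
        have "t = {#1#} + replicate_mset ((p^2 - 1) div 4) 4"
          using ct_ff[OF p m3 v3] ff_def[OF p m3 v3] f fM M' v' by simp
        also have "\<dots> = cycle_type (Fp2 p) (affine p g (0,0))"
          using ct_ff[OF p gsq z3] ff_def[OF p gsq z3] g' by simp
        finally have "t = cycle_type (Fp2 p) (affine p g (0,0))" .
        moreover have "affine p g (0,0) \<in> affine_group p Gg"
          using Gg_mem(2) p0 by (simp add: affine_groupI Fp2_def)
        ultimately show ?thesis by blast
      qed
    qed
  qed
  show ?thesis unfolding gen spectrum_perm_def
    using card_Fp2 s1 s2 pr1 pr2 niso spec by simp
qed


end
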